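(* Let $\mathcal{A}$ be a finite alphabet with $\#\mathcal{A}\ge2$. For every irreducible pair $\mathbf{p}$ on $\mathcal{A}$, $d_{\mathrm{cycle}}(\mathbf{p},\mathrm{Std}(\mathcal{A}))\le\#\mathcal{A}-2$.
   Context: Let $n=\#\mathcal{A}$. A pair is $\mathbf{p}=(p_0,p_1)$ with $p_0,p_1:\mathcal{A}\to\{1,\dots,n\}$ bijections. Irreducible: $p_0^{-1}\{1,\dots,k\}\ne p_1^{-1}\{1,\dots,k\}$ for $1\le k<n$. Rauzy move of type $\varepsilon$: $\varepsilon\mathbf{p}=(p'_0,p'_1)$, $p'_\varepsilon=p_\varepsilon$, and for $z=p_\varepsilon^{-1}(n)$, $p'_{1-\varepsilon}(b)=p_{1-\varepsilon}(b)$ if $p_{1-\varepsilon}(b)\le p_{1-\varepsilon}(z)$, $=p_{1-\varepsilon}(b)+1$ if $p_{1-\varepsilon}(z)<p_{1-\varepsilon}(b)<n$, $=p_{1-\varepsilon}(z)+1$ if $p_{1-\varepsilon}(b)=n$. A Rauzy path is a sequence of Rauzy moves, written $\varepsilon_1^{k_1}\cdots\varepsilon_m^{k_m}$ with $k_i>0$ and $\varepsilon_{i+1}=1-\varepsilon_i$ (each $\varepsilon_i^{k_i}$ meaning $k_i$ consecutive moves of type $\varepsilon_i$); its cycle length is $m$. For pairs $\mathbf{p},\mathbf{p}'$ in the same Rauzy class, $d_{\mathrm{cycle}}(\mathbf{p},\mathbf{p}')=0$ if $\mathbf{p}=\mathbf{p}'$ and otherwise the minimum cycle length of a Rauzy path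 from $\mathbf{p}$ to $\mathbf{p}'$. $\mathrm{Std}(\mathcal{A})$ is the set of standard pairs, i.e. those with $p_0^{-1}(1)=p_1^{-1}(n)$ and $p_1^{-1}(1)=p_0^{-1}(n)$, and $d_{\mathrm{cycle}}(\mathbf{p},\mathrm{Std}(\mathcal{A}))$ is the minimum of $d_{\mathrm{cycle}}(\mathbf{p},\mathbf{q})$ over standard $\mathbf{q}$ reachable from $\mathbf{p}$ by Rauzy moves. *)

theory Defs
  imports Main "HOL-Library.Cardinality"
begin

text \<open>The alphabet is the finite type 'a; n = CARD('a). A pair is (p0, p1) with
  p0, p1 :: 'a => nat bijections onto {1..n}. Move types are encoded as nats 0 and 1.\<close>

type_synonym 'a rpair = "('a \<Rightarrow> nat) \<times> ('a \<Rightarrow> nat)"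

definition is_pair :: "('a::finite) rpair \<Rightarrow> bool" where
  "is_pair p \<longleftrightarrow> bij_betw (fst p) UNIV {1..CARD('a) } \<and> bij_betw (snd p) UNIV {1..CARD('a) }"

definition irreducible_pair :: "('a::finite) rpair \<Rightarrow> bool" where
  "irreducible_pair p \<longleftrightarrow> is_pair p \<and>
     (\<forall>k. 1 \<le> k \<and> k < CARD('a) \<longrightarrow> fst p -` {1..k} \<noteq> snd p -` {1..k})"

definition rauzy_move :: "nat \<Rightarrow> ('a::finite) rpair \<Rightarrow> 'a rpair" where
  "rauzy_move e p = (let n = CARD('a);
       pe = (if e = 0 then fst p else snd p);
       po = (if e = 0 then snd p else fst p);
       z = (THE z. pe z = n);
       po' = (\<lambda>b. if po b \<le> po z then po b
                  else if po b < n then po b + 1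
                  else po z + 1)
     in if e = 0 then (fst p, po') else (po', snd p))"

fun apply_moves :: "nat list \<Rightarrow> ('a::finite) rpair \<Rightarrow> 'a rpair" where
  "apply_moves [] p = p"
| "apply_moves (e # es) p = apply_moves es (rauzy_move e p)"

fun cycle_length :: "nat list \<Rightarrow> nat" where
  "cycle_length [] = 0"
| "cycle_length [x] = 1"
| "cycle_length (x # y # xs) = (if x = y then 0 else 1) + cycle_length (y # xs)"

definition rauzy_reachable :: "('a::finite) rpair \<Rightarrow> 'a rpair \<Rightarrow> bool" where
  "rauzy_reachable p q \<longleftrightarrow> (\<exists>es. set es \<subseteq> {0,1} \<and> apply_moves es p = q)"

definition d_cycle :: "('a::finite) rpair \<Rightarrow> 'a rpair \<Rightarrow> nat" where
  "d_cycle p q = (if p = q then 0 else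
     (LEAST m. \<exists>es. set es \<subseteq> {0,1} \<and> apply_moves es p = q \<and> cycle_length es = m))"

definition standard_pair :: "('a::finite) rpair \<Rightarrow> bool" where
  "standard_pair p \<longleftrightarrow> is_pair p \<and>
     fst p -` {1} = snd p -` {CARD('a) } \<and> snd p -` {1} = fst p -` {CARD('a) }"

definition d_cycle_Std :: "('a::finite) rpair \<Rightarrow> nat" where
  "d_cycle_Std p = Min {d_cycle p q | q. standard_pair q \<and> rauzy_reachable p q}"

end

theory Submission
  imports Defs
begin

lemma the_z:
  assumes "bij_betw g UNIV {1..CARD('a::finite)}" "g z = CARD('a)"
  shows "(THE z. g z = CARD('a)) = z"
  using assms by (metis (mono_tags) bij_betw_imp_inj_on injD the_equality)

lemma move1:
  fixes f g :: "'a::finite \<Rightarrow> nat"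
  assumes "bij_betw g UNIV {1..CARD('a)}" "g z = CARD('a)"
  shows "rauzy_move 1 (f,g) = ((\<lambda>b. if f b \<le> f z then f b else if f b < CARD('a) then f b + 1 else f z + 1), g)"
proof -
  have t: "(THE z. g z = CARD('a)) = z" by (rule the_z[OF assms])
  show ?thesis
    unfolding rauzy_move_def Let_def fst_conv snd_conv
    by (simp only: if_False one_neq_zero t)
qed

lemma apply_moves_append: "apply_moves (xs @ ys) p = apply_moves ys (apply_moves xs p)"
  by (induction xs arbitrary: p) auto

lemma block1:
  fixes f g :: "'a::finite \<Rightarrow> nat"
  assumes bg: "bij_betw g UNIV {1..CARD('a)}" and gz: "g z = CARD('a)" and fz: "f z = q"
    and fle: "\<forall>b. f b \<le> CARD('a)"
  shows "k \<le> CARD('a) - q \<Longrightarrow> apply_moves (replicate k 1) (f,g) =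
    ((\<lambda>b. if f b \<le> q then f b else if f b + k \<le> CARD('a) then f b + k else f b + k - (CARD('a) - q)), g)"
proof (induction k)
  case 0
  then show ?case using fle by (auto intro!: ext)
next
  case (Suc k)
  have IH: "apply_moves (replicate k 1) (f,g) =
    ((\<lambda>b. if f b \<le> q then f b else if f b + k \<le> CARD('a) then f b + k else f b + k - (CARD('a) - q)), g)"
    using Suc by simp
  have "apply_moves (replicate (Suc k) 1) (f,g) = rauzy_move 1 (apply_moves (replicate k 1) (f,g))"
  proof -
    have "replicate (Suc k) (1::nat) = replicate k 1 @ [1]" by (simp add: replicate_append_same)
    then show ?thesis by (simp add: apply_moves_append)
  qed
  also have "\<dots> = ((\<lambda>b. let y = (if f b \<le> q then f b else if f b + k \<le> CARD('a) then f b + k else f b + k - (CARD('a) - q))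
      in if y \<le> q then y else if y < CARD('a) then y + 1 else q + 1), g)"
    unfolding IH by (subst move1[OF bg gz]) (auto simp: fz Let_def)
  also have "\<dots> = ((\<lambda>b. if f b \<le> q then f b else if f b + Suc k \<le> CARD('a) then f b + Suc k else f b + Suc k - (CARD('a) - q)), g)"
  proof -
    have "\<And>b. (let y = (if f b \<le> q then f b else if f b + k \<le> CARD('a) then f b + k else f b + k - (CARD('a) - q))
      in if y \<le> q then y else if y < CARD('a) then y + 1 else q + 1) =
      (if f b \<le> q then f b else if f b + Suc k \<le> CARD('a) then f b + Suc k else f b + Suc k - (CARD('a) - q))"
    proof -
      fix b
      have "f b \<le> CARD('a)" using fle by auto
      then show "?thesis b" using Suc.prems unfolding Let_def by (auto split: if_splits)
    qed
    then show ?thesis by auto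
  qed
  finally show ?case .
qed


lemma block_arith: "(if fx \<le> q then fx else if fx + k \<le> n then fx + k else fx + k - (n - q)) =
      (if fy \<le> q then fy else if fy + k \<le> n then fy + k else fy + k - (n - q)) \<Longrightarrow> fx \<le> n \<Longrightarrow> fy \<le> (n::nat) \<Longrightarrow> k \<le> n - q \<Longrightarrow> fx = fy"
  by (simp split: if_split_asm; arith)

lemma bij_from_inj:
  fixes F :: "'a::finite \<Rightarrow> nat"
  assumes "inj F" "\<forall>b. 1 \<le> F b \<and> F b \<le> CARD('a)"
  shows "bij_betw F UNIV {1..CARD('a)}"
proof -
  have sub: "F ` UNIV \<subseteq> {1..CARD('a)}" using assms(2) by auto
  have "card (F ` UNIV) = CARD('a)" using assms(1) by (simp add: card_image)
  then have "F ` UNIV = {1..CARD('a)}" using sub by (intro card_subset_eq) auto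
  then show ?thesis using assms(1) by (simp add: bij_betw_def)
qed

lemma pair_facts:
  fixes f :: "'a::finite \<Rightarrow> nat"
  assumes "bij_betw f UNIV {1..CARD('a)}"
  shows "inj f" "\<And>b. 1 \<le> f b" "\<And>b. f b \<le> CARD('a)" "\<And>i. 1 \<le> i \<Longrightarrow> i \<le> CARD('a) \<Longrightarrow> \<exists>b. f b = i"
proof -
  show "inj f" using assms by (simp add: bij_betw_def)
  show "\<And>b. 1 \<le> f b" "\<And>b. f b \<le> CARD('a)" using bij_betwE[OF assms] by auto
  show "\<And>i. 1 \<le> i \<Longrightarrow> i \<le> CARD('a) \<Longrightarrow> \<exists>b. f b = i"
    using assms unfolding bij_betw_def by (metis UNIV_I atLeastAtMost_iff imageE)
qed

lemma card_le_set:
  fixes f :: "'a::finite \<Rightarrow> nat"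
  assumes "bij_betw f UNIV {1..CARD('a)}" "k \<le> CARD('a)"
  shows "card {b. f b \<le> k} = k"
proof -
  have "{b. f b \<le> k} = f -` {1..k}" using pair_facts(2)[OF assms(1)] by auto
  moreover have "{1..k} \<subseteq> range f" using assms unfolding bij_betw_def by auto
  ultimately show ?thesis using card_vimage_inj[OF pair_facts(1)[OF assms(1)]] by simp
qed

lemma block_pair:
  fixes f :: "'a::finite \<Rightarrow> nat"
  assumes "bij_betw f UNIV {1..CARD('a)}" "k \<le> CARD('a) - q"
  shows "bij_betw (\<lambda>b. if f b \<le> q then f b else if f b + k \<le> CARD('a) then f b + k else f b + k - (CARD('a) - q)) UNIV {1..CARD('a)}"
proof (rule bij_from_inj)
  note pf = pair_facts[OF assms(1)]
  show "inj (\<lambda>b. if f b \<le> q then f b else if f b + k \<le> CARD('a) then f b + k else f b + k - (CARD('a) - q))"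
  proof (rule injI)
    fix x y
    assume "(if f x \<le> q then f x else if f x + k \<le> CARD('a) then f x + k else f x + k - (CARD('a) - q)) =
      (if f y \<le> q then f y else if f y + k \<le> CARD('a) then f y + k else f y + k - (CARD('a) - q))"
    then have "f x = f y" using pf(3)[of x] pf(3)[of y] assms(2) by (rule block_arith)
    then show "x = y" using pf(1) by (auto dest: injD)
  qed
  show "\<forall>b. 1 \<le> (if f b \<le> q then f b else if f b + k \<le> CARD('a) then f b + k else f b + k - (CARD('a) - q)) \<and>
     (if f b \<le> q then f b else if f b + k \<le> CARD('a) then f b + k else f b + k - (CARD('a) - q)) \<le> CARD('a)"
  proof
    fix b
    have "1 \<le> f b" "f b \<le> CARD('a)" using pf(2,3) by auto
    then show "1 \<le> (if f b \<le> q then f b else if f b + k \<le> CARD('a) then f b + k else f b + k - (CARD('a) - q)) \<and>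
     (if f b \<le> q then f b else if f b + k \<le> CARD('a) then f b + k else f b + k - (CARD('a) - q)) \<le> CARD('a)"
      using assms(2) by (simp split: if_split) arith
  qed
qed

lemma move_swap:
  "e \<in> {0,1} \<Longrightarrow> rauzy_move e (prod.swap S) = prod.swap (rauzy_move (1-e) S)"
  by (cases S) (auto simp: rauzy_move_def Let_def)

lemma apply_swap:
  "set es \<subseteq> {0,1} \<Longrightarrow> apply_moves (map (\<lambda>e. 1-e) es) S = prod.swap (apply_moves es (prod.swap S))"
proof (induction es arbitrary: S)
  case Nil
  then show ?case by simp
next
  case (Cons e es)
  have "e \<in> {0,1}" using Cons.prems by auto
  then have "rauzy_move e (prod.swap S) = prod.swap (rauzy_move (1-e) S)" by (rule move_swap)
  have IH: "apply_moves (map (\<lambda>e. 1-e) es) (rauzy_move (1-e) S) =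
     prod.swap (apply_moves es (prod.swap (rauzy_move (1-e) S)))"
  proof -
    have "set es \<subseteq> {0,1}" using Cons.prems by auto
    then show ?thesis by (rule Cons.IH)
  qed
  have "apply_moves (map (\<lambda>e. 1-e) (e # es)) S = apply_moves (map (\<lambda>e. 1-e) es) (rauzy_move (1-e) S)"
    by simp
  also have "\<dots> = prod.swap (apply_moves es (prod.swap (rauzy_move (1-e) S)))" by (rule IH)
  also have "\<dots> = prod.swap (apply_moves es (rauzy_move e (prod.swap S)))"
    by (simp only: \<open>rauzy_move e (prod.swap S) = _\<close>)
  also have "\<dots> = prod.swap (apply_moves (e # es) (prod.swap S))" by simp
  finally show ?case .
qed

lemma cl_flip: "set es \<subseteq> {0,1} \<Longrightarrow> cycle_length (map (\<lambda>e. 1-e) es) = cycle_length es"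
  by (induction es rule: cycle_length.induct) auto

lemma cl_cons: "cycle_length (e # es) \<le> Suc (cycle_length es)"
  by (cases es) auto

lemma cl_rep_eq: "cycle_length (replicate (Suc k) e @ es) = cycle_length (e # es)"
  by (induction k) auto

lemma cl_rep: "cycle_length (replicate k e @ es) \<le> Suc (cycle_length es)"
  by (cases k) (auto simp del: replicate_Suc simp: cl_rep_eq cl_cons)

lemma standard_swap: "standard_pair (prod.swap S) = standard_pair S"
  by (cases S) (auto simp: standard_pair_def is_pair_def)


lemma vimage_single:
  assumes "inj F" "F c = y"
  shows "F -` {y} = {c}"
proof
  show "F -` {y} \<subseteq> {c}"
  proof
    fix x assume "x \<in> F -` {y}"
    then have "F x = F c" using assms(2) by simp
    then show "x \<in> {c}" using injD[OF assms(1)] by blast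
  qed
  show "{c} \<subseteq> F -` {y}" using assms(2) by simp
qed

lemma main:
  fixes f g :: "'a::finite \<Rightarrow> nat"
  assumes n2: "CARD('a) \<ge> 2"
  shows "is_pair (f,g) \<Longrightarrow> g z = CARD('a) \<Longrightarrow> f z = v \<Longrightarrow>
    (\<forall>j. 1 \<le> j \<and> j < v \<longrightarrow> {b. f b \<le> j} \<noteq> {b. g b \<le> j}) \<Longrightarrow>
    \<exists>es. set es \<subseteq> {0,1} \<and> standard_pair (apply_moves es (f,g)) \<and> cycle_length es \<le> v"
proof (induction v arbitrary: f g z rule: less_induct)
  case (less v)
  have bf: "bij_betw f UNIV {1..CARD('a)}" and bg: "bij_betw g UNIV {1..CARD('a)}"
    using less.prems(1) by (simp_all add: is_pair_def)
  note pf = pair_facts[OF bf] and pg = pair_facts[OF bg]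
  have v1: "1 \<le> v" using pf(2)[of z] less.prems(3) by auto
  have vn: "v \<le> CARD('a)" using pf(3)[of z] less.prems(3) by auto
  have fle: "\<forall>b. f b \<le> CARD('a)" using pf(3) by auto
  show ?case
  proof (cases "v = 1")
    case True
    obtain c where gc: "g c = 1" using pg(4)[of 1] n2 by auto
    have "c \<noteq> z" using gc less.prems(2) n2 by auto
    then have fc: "f c \<noteq> 1" using pf(1) less.prems(3) True by (metis injD)
    have fz1: "f z = 1" using less.prems(3) True by simp
    define k where "k = CARD('a) - f c"
    define F where "F = (\<lambda>b. if f b \<le> 1 then f b else if f b + k \<le> CARD('a) then f b + k else f b + k - (CARD('a) - 1))"
    have kle: "k \<le> CARD('a) - 1" using pf(2)[of c] by (simp add: k_def)
    have mv: "apply_moves (replicate k 1) (f,g) = (F, g)"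
      unfolding F_def by (rule block1[OF bg less.prems(2) fz1 fle kle])
    have bF: "bij_betw F UNIV {1..CARD('a)}" unfolding F_def by (rule block_pair[OF bf kle])
    note pF = pair_facts[OF bF]
    have fck: "f c + k = CARD('a)" using pf(3)[of c] by (simp add: k_def)
    have "\<not> f c \<le> 1" using fc pf(2)[of c] by simp
    then have Fc: "F c = CARD('a)" using fck by (simp add: F_def)
    have Fz: "F z = 1" using fz1 by (simp add: F_def)
    have e1: "F -` {1} = g -` {CARD('a)}"
    proof -
      have "F -` {1} = {z}" by (rule vimage_single[OF pF(1) Fz])
      moreover have "g -` {CARD('a)} = {z}" by (rule vimage_single[OF pg(1) less.prems(2)])
      ultimately show ?thesis by simp
    qed
    have e2: "g -` {1} = F -` {CARD('a)}"
    proof -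
      have "F -` {CARD('a)} = {c}" by (rule vimage_single[OF pF(1) Fc])
      moreover have "g -` {1} = {c}" by (rule vimage_single[OF pg(1) gc])
      ultimately show ?thesis by simp
    qed
    have "standard_pair (F, g)" unfolding standard_pair_def is_pair_def using bF bg e1 e2 by simp
    moreover have "cycle_length (replicate k (1::nat)) \<le> v" using cl_rep[of k 1 "[]"] True by simp
    ultimately show ?thesis using mv by (intro exI[of _ "replicate k 1"]) auto
  next
    case False
    then have v2: "v \<ge> 2" using v1 by simp
    have "\<exists>x. v < f x \<and> g x < v"
    proof (rule ccontr)
      assume H: "\<not> (\<exists>x. v < f x \<and> g x < v)"
      have sub: "{b. g b \<le> v - 1} \<subseteq> {b. f b \<le> v - 1}"
      proof
        fix b assume "b \<in> {b. g b \<le> v - 1}"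
        then have gb: "g b \<le> v - 1" by simp
        have fb: "f b \<le> v" using H gb v2 by (cases "v < f b") auto
        have "b \<noteq> z" using gb less.prems(2) vn v2 by auto
        then have "f b \<noteq> v" using pf(1) less.prems(3) by (metis injD)
        then show "b \<in> {b. f b \<le> v - 1}" using fb by simp
      qed
      have c1: "card {b. g b \<le> v - 1} = v - 1" using card_le_set[OF bg] vn by simp
      have c2: "card {b. f b \<le> v - 1} = v - 1" using card_le_set[OF bf] vn by simp
      have "{b. g b \<le> v - 1} = {b. f b \<le> v - 1}"
        using card_subset_eq[OF _ sub] c1 c2 by simp
      moreover have "{b. f b \<le> v - 1} \<noteq> {b. g b \<le> v - 1}" using less.prems(4) v2 by simp
      ultimately show False by simp
    qed
    then obtain x where fx: "v < f x" and gx: "g x < v" by blast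
    define k where "k = CARD('a) - f x"
    define F where "F = (\<lambda>b. if f b \<le> v then f b else if f b + k \<le> CARD('a) then f b + k else f b + k - (CARD('a) - v))"
    have kle: "k \<le> CARD('a) - v" using fx by (simp add: k_def)
    have mv: "apply_moves (replicate k 1) (f,g) = (F, g)"
      unfolding F_def by (rule block1[OF bg less.prems(2) less.prems(3) fle kle])
    have bF: "bij_betw F UNIV {1..CARD('a)}" unfolding F_def by (rule block_pair[OF bf kle])
    have Fx: "F x = CARD('a)" using fx pf(3)[of x] by (simp add: F_def k_def)
    have Fpre: "{b. F b \<le> j} = {b. f b \<le> j}" if "j \<le> v" for j
    proof -
      have "F b \<le> j \<longleftrightarrow> f b \<le> j" for b
        using that pf(3)[of b] kle by (simp add: F_def split: if_split) arith
      then show ?thesis by simp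
    qed
    have cond: "\<forall>j. 1 \<le> j \<and> j < g x \<longrightarrow> {b. g b \<le> j} \<noteq> {b. F b \<le> j}"
    proof (intro allI impI)
      fix j assume j: "1 \<le> j \<and> j < g x"
      then have "{b. F b \<le> j} = {b. f b \<le> j}" using gx by (intro Fpre) simp
      moreover have "{b. f b \<le> j} \<noteq> {b. g b \<le> j}" using less.prems(4) j gx by simp
      ultimately show "{b. g b \<le> j} \<noteq> {b. F b \<le> j}" by simp
    qed
    have "is_pair (g, F)" using bg bF by (simp add: is_pair_def)
    from less.IH[OF gx this Fx refl cond]
    obtain es' where es': "set es' \<subseteq> {0,1}" "standard_pair (apply_moves es' (g,F))" "cycle_length es' \<le> g x"
      by blast
    define es where "es = replicate k 1 @ map (\<lambda>e. 1-e) es'"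
    have "apply_moves es (f,g) = apply_moves (map (\<lambda>e. 1-e) es') (F,g)"
      unfolding es_def apply_moves_append mv by (rule refl)
    also have "\<dots> = prod.swap (apply_moves es' (prod.swap (F,g)))" by (rule apply_swap[OF es'(1)])
    also have "\<dots> = prod.swap (apply_moves es' (g,F))" by simp
    finally have st: "standard_pair (apply_moves es (f,g))" using es'(2) standard_swap by metis
    have "cycle_length es \<le> Suc (cycle_length (map (\<lambda>e. 1-e) es'))" unfolding es_def by (rule cl_rep)
    also have "\<dots> = Suc (cycle_length es')" using cl_flip[OF es'(1)] by simp
    finally have "cycle_length es \<le> v" using es'(3) gx by simp
    moreover have "set es \<subseteq> {0,1}" using es'(1) by (auto simp: es_def)
    ultimately show ?thesis using st by blast
  qed
qed


lemma le_set_vimage: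
  fixes f :: "'a::finite \<Rightarrow> nat"
  assumes "bij_betw f UNIV {1..CARD('a)}"
  shows "f -` {1..k} = {b. f b \<le> k}"
  using pair_facts(2)[OF assms] by auto

lemma finite_pairs: "finite {q :: ('a::finite) rpair. is_pair q}"
proof -
  have F: "finite {f :: 'a \<Rightarrow> nat. \<forall>x. f x \<in> {1..CARD('a)}}"
    using finite_set_of_finite_funs[of "UNIV :: 'a set" "{1..CARD('a)}" 0] by simp
  have "{q :: 'a rpair. is_pair q} \<subseteq> {f :: 'a \<Rightarrow> nat. \<forall>x. f x \<in> {1..CARD('a)}} \<times> {f :: 'a \<Rightarrow> nat. \<forall>x. f x \<in> {1..CARD('a)}}"
    by (auto simp: is_pair_def dest: bij_betwE)
  then show ?thesis using finite_subset F by blast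
qed

theorem lemma2p26:
  fixes p :: "('a::finite) rpair"
  assumes "CARD('a) \<ge> 2"
    and "irreducible_pair p"
  shows "(\<exists>q. standard_pair q \<and> rauzy_reachable p q) \<and> d_cycle_Std p \<le> CARD('a) - 2"
proof -
  obtain f g where p: "p = (f,g)" by (cases p)
  have ip: "is_pair (f,g)" using assms(2) p by (simp add: irreducible_pair_def)
  have bf: "bij_betw f UNIV {1..CARD('a)}" and bg: "bij_betw g UNIV {1..CARD('a)}"
    using ip by (simp_all add: is_pair_def)
  note pf = pair_facts[OF bf] and pg = pair_facts[OF bg]
  have irr: "\<forall>k. 1 \<le> k \<and> k < CARD('a) \<longrightarrow> {b. f b \<le> k} \<noteq> {b. g b \<le> k}"
  proof (intro allI impI)
    fix k :: nat assume k: "1 \<le> k \<and> k < CARD('a)"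
    have "fst p -` {1..k} \<noteq> snd p -` {1..k}" using assms(2) k unfolding irreducible_pair_def by blast
    then show "{b. f b \<le> k} \<noteq> {b. g b \<le> k}" using p le_set_vimage[OF bf, of k] le_set_vimage[OF bg, of k] by simp
  qed
  have ex: "\<exists>es. set es \<subseteq> {0,1} \<and> standard_pair (apply_moves es p) \<and> cycle_length es \<le> CARD('a) - 2"
  proof (cases "CARD('a) = 2")
    case True
    obtain a where fa: "f a = 1" using pf(4)[of 1] assms(1) by auto
    obtain c where gc: "g c = 1" using pg(4)[of 1] assms(1) by auto
    have "f b \<le> 1 \<longleftrightarrow> f b = 1" "g b \<le> 1 \<longleftrightarrow> g b = 1" for b using pf(2)[of b] pg(2)[of b] by auto
    then have "{b. f b \<le> 1} = f -` {1}" "{b. g b \<le> 1} = g -` {1}" by auto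
    moreover have "{b. f b \<le> 1} \<noteq> {b. g b \<le> 1}" using irr True by simp
    ultimately have "f -` {1} \<noteq> g -` {1}" by simp
    then have ac: "a \<noteq> c" using vimage_single[OF pf(1) fa] vimage_single[OF pg(1) gc] by auto
    have "g a \<noteq> 1" using ac gc injD[OF pg(1), of a c] by auto
    then have ga: "g a = CARD('a)" using pg(2)[of a] pg(3)[of a] True by simp
    have "f c \<noteq> 1" using ac fa injD[OF pf(1), of c a] by auto
    then have fc: "f c = CARD('a)" using pf(2)[of c] pf(3)[of c] True by simp
    have "standard_pair (f,g)" unfolding standard_pair_def fst_conv snd_conv
      using ip vimage_single[OF pf(1) fa] vimage_single[OF pg(1) gc]
        vimage_single[OF pf(1) fc] vimage_single[OF pg(1) ga] by simp
    then show ?thesis using p by (intro exI[of _ "[]"]) simp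
  next
    case False
    then have n3: "CARD('a) \<ge> 3" using assms(1) by simp
    obtain z0 where gz: "g z0 = CARD('a)" using pg(4)[of "CARD('a)"] n3 by auto
    obtain w0 where fw: "f w0 = CARD('a)" using pf(4)[of "CARD('a)"] n3 by auto
    have fle1: "f b \<le> CARD('a) - 1 \<longleftrightarrow> b \<noteq> w0" for b
    proof -
      have "f b = CARD('a) \<longleftrightarrow> b = w0" using fw injD[OF pf(1), of b w0] by auto
      then show ?thesis using pf(3)[of b] n3 by (cases "b = w0") auto
    qed
    have gle1: "g b \<le> CARD('a) - 1 \<longleftrightarrow> b \<noteq> z0" for b
    proof -
      have "g b = CARD('a) \<longleftrightarrow> b = z0" using gz injD[OF pg(1), of b z0] by auto
      then show ?thesis using pg(3)[of b] n3 by (cases "b = z0") auto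
    qed
    have "z0 \<noteq> w0"
    proof
      assume "z0 = w0"
      then have "{b. f b \<le> CARD('a) - 1} = {b. g b \<le> CARD('a) - 1}" using fle1 gle1 by auto
      then show False using irr n3 by auto
    qed
    have q0: "f z0 \<le> CARD('a) - 1" using fle1 \<open>z0 \<noteq> w0\<close> by simp
    have r0: "g w0 \<le> CARD('a) - 1" using gle1 \<open>z0 \<noteq> w0\<close> by simp
    have notboth: "\<not> (f z0 = CARD('a) - 1 \<and> g w0 = CARD('a) - 1)"
    proof
      assume H: "f z0 = CARD('a) - 1 \<and> g w0 = CARD('a) - 1"
      have "f b \<le> CARD('a) - 2 \<longleftrightarrow> b \<noteq> w0 \<and> b \<noteq> z0" for b
      proof -
        have "f b = CARD('a) \<longleftrightarrow> b = w0" "f b = CARD('a) - 1 \<longleftrightarrow> b = z0"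
          using fw H injD[OF pf(1), of b w0] injD[OF pf(1), of b z0] by auto
        then show ?thesis using pf(3)[of b] n3 by (cases "b = w0"; cases "b = z0") auto
      qed
      moreover have "g b \<le> CARD('a) - 2 \<longleftrightarrow> b \<noteq> w0 \<and> b \<noteq> z0" for b
      proof -
        have "g b = CARD('a) \<longleftrightarrow> b = z0" "g b = CARD('a) - 1 \<longleftrightarrow> b = w0"
          using gz H injD[OF pg(1), of b w0] injD[OF pg(1), of b z0] by auto
        then show ?thesis using pg(3)[of b] n3 by (cases "b = w0"; cases "b = z0") auto
      qed
      ultimately have "{b. f b \<le> CARD('a) - 2} = {b. g b \<le> CARD('a) - 2}" by auto
      then show False using irr n3 by auto
    qed
    show ?thesis
    proof (cases "f z0 \<le> g w0")
      case True
      have cond: "\<forall>j. 1 \<le> j \<and> j < f z0 \<longrightarrow> {b. f b \<le> j} \<noteq> {b. g b \<le> j}"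
        using irr q0 by auto
      obtain es where es: "set es \<subseteq> {0,1}" "standard_pair (apply_moves es (f,g))" "cycle_length es \<le> f z0"
        using main[OF assms(1) ip gz refl cond] by blast
      have "f z0 \<le> CARD('a) - 2" using True q0 r0 notboth by linarith
      then show ?thesis using es p by (intro exI[of _ es]) simp
    next
      case False
      have ip': "is_pair (g,f)" using bf bg by (simp add: is_pair_def)
      have cond: "\<forall>j. 1 \<le> j \<and> j < g w0 \<longrightarrow> {b. g b \<le> j} \<noteq> {b. f b \<le> j}"
        using irr r0 by auto
      obtain es where es: "set es \<subseteq> {0,1}" "standard_pair (apply_moves es (g,f))" "cycle_length es \<le> g w0"
        using main[OF assms(1) ip' fw refl cond] by blast
      have le: "g w0 \<le> CARD('a) - 2" using False q0 r0 notboth by linarith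
      have "apply_moves (map (\<lambda>e. 1-e) es) (f,g) = prod.swap (apply_moves es (prod.swap (f,g)))"
        by (rule apply_swap[OF es(1)])
      then have "standard_pair (apply_moves (map (\<lambda>e. 1-e) es) p)"
        using es(2) standard_swap[of "apply_moves es (g,f)"] p by simp
      moreover have "set (map (\<lambda>e. 1-e) es) \<subseteq> {0,1}" by auto
      moreover have "cycle_length (map (\<lambda>e. 1-e) es) \<le> CARD('a) - 2" using cl_flip[OF es(1)] es(3) le by simp
      ultimately show ?thesis by blast
    qed
  qed
  then obtain es where es: "set es \<subseteq> {0,1}" "standard_pair (apply_moves es p)" "cycle_length es \<le> CARD('a) - 2"
    by blast
  define q where "q = apply_moves es p"
  have reach: "rauzy_reachable p q" using es(1) by (auto simp: rauzy_reachable_def q_def)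
  have dq: "d_cycle p q \<le> cycle_length es"
  proof (cases "p = q")
    case True then show ?thesis by (simp add: d_cycle_def)
  next
    case False
    have "(LEAST m. \<exists>es. set es \<subseteq> {0,1} \<and> apply_moves es p = q \<and> cycle_length es = m) \<le> cycle_length es"
      by (rule Least_le) (use es(1) q_def in blast)
    then show ?thesis using False by (simp add: d_cycle_def)
  qed
  have sub: "{d_cycle p q | q. standard_pair q \<and> rauzy_reachable p q} \<subseteq> d_cycle p ` {q. is_pair q}"
    by (auto simp: standard_pair_def)
  have fin: "finite {d_cycle p q | q. standard_pair q \<and> rauzy_reachable p q}"
    using finite_subset[OF sub] finite_pairs by blast
  have mem: "d_cycle p q \<in> {d_cycle p q | q. standard_pair q \<and> rauzy_reachable p q}"
    using es(2) reach q_def by blast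
  have "d_cycle_Std p \<le> d_cycle p q" unfolding d_cycle_Std_def by (rule Min_le[OF fin mem])
  then have "d_cycle_Std p \<le> CARD('a) - 2" using dq es(3) by linarith
  moreover have "\<exists>q. standard_pair q \<and> rauzy_reachable p q" using es(2) reach q_def by blast
  ultimately show ?thesis by blast
qed

end
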